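(* Let $n\ge 3$ be an integer and let $\varphi$ be the automorphism of $F$ with $\varphi(x)=x$, $\varphi(y)=yx$. Then $(\varphi(r_1),\varphi(r_2))\sim_{AC}(r_1,r_2)$, where $(r_1,r_2)=\mathrm{AK}(n)=(xyxy^{-1}x^{-1}y^{-1},\ x^ny^{-(n+1)})$.
   Context: $F=F(x,y)$ is the free group on $\{x,y\}$. The Akbulut–Kurby pair is $\mathrm{AK}(n)=(xyxy^{-1}x^{-1}y^{-1},\ x^{n}y^{-(n+1)})$, i.e. the presentation $\langle x,y\mid xyx=yxy,\ x^n=y^{n+1}\rangle$ of the trivial group. The Andrews–Curtis (AC) moves on a pair $(r_1,r_2)\in F^2$ are: replace $r_i$ by $r_ir_j$ ($i\ne j$); replace $r_i$ by $r_i^{-1}$; replace $r_i$ by $w^{-1}r_iw$ for some $w\in F$. Two pairs are AC-equivalent, $\sim_{AC}$, if one can be obtained from the other by a finite sequence of AC-moves. *)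

theory Defs
  imports Main
begin

text \<open>The free group F(x,y), modelled by freely reduced words.
  A letter is a generator together with an exponent sign (True = +1, False = -1).\<close>

datatype gen = X | Y

type_synonym letter = "gen \<times> bool"
type_synonym word = "letter list"

fun push :: "letter \<Rightarrow> word \<Rightarrow> word" where
  "push a [] = [a]"
| "push a (b # w) = (if fst a = fst b \<and> snd a \<noteq> snd b then w else a # b # w)"

definition red :: "word \<Rightarrow> word" where
  "red w = foldr push w []"

definition fmult :: "word \<Rightarrow> word \<Rightarrow> word" where
  "fmult u v = red (u @ v)"

definition finv :: "word \<Rightarrow> word" where
  "finv w = red (rev (map (\<lambda>(g, s). (g, \<not> s)) w))"

definition gx :: word where "gx = [(X, True)]"
definition gy :: word where "gy = [(Y, True)]"

fun phi_letter :: "letter \<Rightarrow> word" where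
  "phi_letter (X, s) = [(X, s)]"
| "phi_letter (Y, True) = [(Y, True), (X, True)]"
| "phi_letter (Y, False) = [(X, False), (Y, False)]"

definition phi :: "word \<Rightarrow> word" where
  "phi w = red (concat (map phi_letter w))"

inductive ac_move :: "word \<times> word \<Rightarrow> word \<times> word \<Rightarrow> bool" where
  mult1: "ac_move (r1, r2) (fmult r1 r2, r2)"
| mult2: "ac_move (r1, r2) (r1, fmult r2 r1)"
| inv1: "ac_move (r1, r2) (finv r1, r2)"
| inv2: "ac_move (r1, r2) (r1, finv r2)"
| conj1: "ac_move (r1, r2) (fmult (finv w) (fmult r1 w), r2)"
| conj2: "ac_move (r1, r2) (r1, fmult (finv w) (fmult r2 w))"

definition ac_equiv :: "word \<times> word \<Rightarrow> word \<times> word \<Rightarrow> bool" where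
  "ac_equiv p q = ac_move\<^sup>*\<^sup>* p q"

definition AK1 :: word where
  "AK1 = [(X, True), (Y, True), (X, True), (Y, False), (X, False), (Y, False)]"

definition AK2 :: "nat \<Rightarrow> word" where
  "AK2 n = replicate n (X, True) @ replicate (n + 1) (Y, False)"

end

theory Submission
  imports Defs
begin

definition flip :: "letter \<Rightarrow> letter" where "flip l = (fst l, \<not> snd l)"
definition iw :: "word \<Rightarrow> word" where "iw w = rev (map (\<lambda>(g, s). (g, \<not> s)) w)"

lemma iw_Nil[simp]: "iw [] = []" by (simp add: iw_def)
lemma iw_Cons[simp]: "iw (a # w) = iw w @ [flip a]"
  by (cases a) (simp add: iw_def flip_def)
lemma iw_append[simp]: "iw (u @ v) = iw v @ iw u" by (simp add: iw_def)
lemma flip_flip[simp]: "flip (flip a) = a" by (simp add: flip_def)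

fun rd :: "word \<Rightarrow> bool" where
  "rd [] = True" | "rd [a] = True"
| "rd (a # b # w) = (\<not> (fst a = fst b \<and> snd a \<noteq> snd b) \<and> rd (b # w))"

lemma rd_tl: "rd (a # w) \<Longrightarrow> rd w"
  by (cases w) auto

lemma rd_push: "rd z \<Longrightarrow> rd (push a z)"
proof (cases z)
  case Nil then show ?thesis by simp
next
  case (Cons b w)
  assume "rd z"
  then show ?thesis using Cons by (auto dest: rd_tl)
qed

lemma rd_foldr: "rd z \<Longrightarrow> rd (foldr push u z)"
  by (induction u) (auto intro: rd_push)

lemma rd_red: "rd (red w)" unfolding red_def by (rule rd_foldr) simp

lemma push_flip: "rd z \<Longrightarrow> push (flip a) (push a z) = z"
proof (cases z)
  case Nil then show ?thesis by (simp add: flip_def)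
next
  case (Cons b w)
  assume r: "rd z"
  show ?thesis
  proof (cases "fst a = fst b \<and> snd a \<noteq> snd b")
    case True
    then show ?thesis using Cons r
      by (cases w) (auto simp: flip_def prod_eq_iff)
  next
    case False
    then show ?thesis using Cons by (auto simp: flip_def)
  qed
qed

lemma push_flip': "rd z \<Longrightarrow> push a (push (flip a) z) = z"
  using push_flip[of z "flip a"] by simp

lemma red_rd: "rd w \<Longrightarrow> red w = w"
proof (induction w)
  case Nil then show ?case by (simp add: red_def)
next
  case (Cons a w)
  then have "red w = w" by (auto dest: rd_tl)
  then show ?case using Cons.prems unfolding red_def
    by (cases w) auto
qed

lemma red_red[simp]: "red (red w) = red w" by (rule red_rd[OF rd_red])

lemma foldr_push_push:
  assumes "rd w" "rd z"
  shows "foldr push (push a w) z = push a (foldr push w z)"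
proof (cases w)
  case Nil then show ?thesis by simp
next
  case (Cons b w')
  show ?thesis
  proof (cases "fst a = fst b \<and> snd a \<noteq> snd b")
    case True
    then have "a = flip b" by (cases a; cases b) (auto simp: flip_def)
    moreover have "rd (foldr push w' z)" using assms Cons by (auto intro: rd_foldr dest: rd_tl)
    ultimately show ?thesis using Cons True by (simp add: push_flip)
  next
    case False
    then show ?thesis using Cons by auto
  qed
qed

lemma foldr_red: "rd z \<Longrightarrow> foldr push (red u) z = foldr push u z"
proof (induction u)
  case Nil then show ?case by (simp add: red_def)
next
  case (Cons a u)
  have "red (a # u) = push a (red u)" by (simp add: red_def)
  then show ?case using Cons foldr_push_push[OF rd_red Cons.prems] by simp
qed

lemma red_append: "red (u @ v) = foldr push u (red v)"
  by (simp add: red_def)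

lemma red_Cons: "red (a # w) = push a (red w)"
  by (simp add: red_def)

lemma red_red_left: "red (red u @ v) = red (u @ v)"
  by (simp add: red_append foldr_red rd_red)

lemma red_red_right: "red (u @ red v) = red (u @ v)"
  by (simp add: red_append)

lemma red_iw_cancel: "red (iw u @ u @ v) = red v"
proof (induction u arbitrary: v)
  case Nil then show ?case by simp
next
  case (Cons a u)
  have "red (iw (a # u) @ (a # u) @ v) = red (iw u @ [flip a, a] @ u @ v)" by simp
  also have "\<dots> = foldr push (iw u) (push (flip a) (push a (red (u @ v))))"
    by (simp add: red_append red_Cons)
  also have "\<dots> = foldr push (iw u) (red (u @ v))"
    using push_flip'[of "red (u @ v)" "flip a"] rd_red by simp
  also have "\<dots> = red (iw u @ u @ v)" by (simp add: red_append)
  finally show ?case using Cons by simp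
qed

lemma iw_iw[simp]: "iw (iw u) = u" by (induction u) auto

lemma red_cancel_iw: "red (u @ iw u @ v) = red v"
  using red_iw_cancel[of "iw u" v] by simp

lemma red_iw_red: "red (iw (red w)) = red (iw w)"
proof -
  have "red (iw w) = red (iw w @ red w @ iw (red w))"
  proof -
    have "red (iw w @ red w @ iw (red w)) = foldr push (iw w) (red (red w @ iw (red w)))"
      by (simp add: red_append)
    also have "\<dots> = foldr push (iw w) (red [])"
      using red_cancel_iw[of "red w" "[]"] by simp
    finally show ?thesis by (simp add: red_append red_def)
  qed
  also have "\<dots> = red (iw w @ w @ iw (red w))"
    by (simp add: red_append) (metis red_append red_red_left)
  also have "\<dots> = red (iw (red w))" by (rule red_iw_cancel)
  finally show ?thesis by simp
qed


typedef fg = "{w. red w = w}" morphisms Rep Abs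
  by (rule exI[of _ "[]"]) (simp add: red_def)

lemma Rep_red[simp]: "red (Rep a) = Rep a" using Rep[of a] by simp
lemma Rep_Abs_red[simp]: "Rep (Abs (red w)) = red w" by (simp add: Abs_inverse)

instantiation fg :: group_add
begin
definition "0 = Abs []"
definition "a + b = Abs (red (Rep a @ Rep b))"
definition "- a = Abs (red (iw (Rep a)))"
definition "a - b = a + (- (b::fg))"
instance
proof
  fix a b c :: fg
  show "a + b + c = a + (b + c)"
    unfolding plus_fg_def
    by (simp add: red_red_left red_red_right)
  have z: "Rep (0::fg) = []" unfolding zero_fg_def
    using Rep_Abs_red[of "[]"] by (simp add: red_def)
  show "0 + a = a" unfolding plus_fg_def using z by (simp add: Rep_inverse)
  show "a + 0 = a" unfolding plus_fg_def using z by (simp add: Rep_inverse)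
  show "- a + a = 0" unfolding plus_fg_def uminus_fg_def zero_fg_def
  proof -
    have "red (red (iw (Rep a)) @ Rep a) = []"
      using red_iw_cancel[of "Rep a" "[]"] by (simp add: red_red_left, simp add: red_def)
    then show "Abs (red (Rep (Abs (red (iw (Rep a)))) @ Rep a)) = Abs []" by simp
  qed
  show "a + - b = a - b" by (simp add: minus_fg_def)
qed
end

definition ev :: "word \<Rightarrow> fg" where "ev w = Abs (red w)"

lemma Rep_ev: "Rep (ev w) = red w" by (simp add: ev_def)
lemma ev_Rep[simp]: "ev (Rep a) = a" by (simp add: ev_def Rep_inverse)
lemma Rep_plus: "Rep (a + b) = red (Rep a @ Rep b)" by (simp add: plus_fg_def)
lemma Rep_uminus: "Rep (- a) = red (iw (Rep a))" by (simp add: uminus_fg_def)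

lemma ev_append: "ev (u @ v) = ev u + ev v"
  unfolding ev_def plus_fg_def by (simp add: red_red_left red_red_right)
lemma ev_Nil: "ev [] = 0" by (simp add: ev_def zero_fg_def red_def)
lemma ev_Cons: "ev (a # w) = ev [a] + ev w"
  using ev_append[of "[a]" w] by simp
lemma ev_iw: "ev (iw w) = - ev w"
  unfolding ev_def uminus_fg_def by (simp add: red_iw_red)

lemma fmult_Rep: "fmult u v = Rep (ev u + ev v)"
  by (simp add: fmult_def Rep_plus Rep_ev red_red_left red_red_right)
lemma finv_Rep: "finv u = Rep (- ev u)"
  by (simp add: finv_def Rep_uminus Rep_ev red_iw_red iw_def[symmetric])


definition E :: "fg \<Rightarrow> fg \<Rightarrow> fg \<Rightarrow> fg \<Rightarrow> bool" where
  "E a b c d = ac_equiv (Rep a, Rep b) (Rep c, Rep d)"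

lemma E_refl: "E a b a b" by (simp add: E_def ac_equiv_def)
lemma E_trans: "E a b c d \<Longrightarrow> E c d e f \<Longrightarrow> E a b e f"
  unfolding E_def ac_equiv_def by (rule rtranclp_trans)

lemma move_E: "ac_move (Rep a, Rep b) (Rep c, Rep d) \<Longrightarrow> E a b c d"
  unfolding E_def ac_equiv_def by (rule r_into_rtranclp)

lemma E_mult1: "E a b (a + b) b"
  by (rule move_E) (metis ac_move.mult1 fmult_Rep ev_Rep)
lemma E_mult2: "E a b a (b + a)"
  by (rule move_E) (metis ac_move.mult2 fmult_Rep ev_Rep)
lemma E_inv1: "E a b (- a) b"
  by (rule move_E) (metis ac_move.inv1 finv_Rep ev_Rep)
lemma E_inv2: "E a b a (- b)"
  by (rule move_E) (metis ac_move.inv2 finv_Rep ev_Rep)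
lemma E_conj1: "E a b (- w + (a + w)) b"
proof (rule move_E)
  have "fmult (finv (Rep w)) (fmult (Rep a) (Rep w)) = Rep (- w + (a + w))"
    by (simp add: fmult_Rep finv_Rep)
  then show "ac_move (Rep a, Rep b) (Rep (- w + (a + w)), Rep b)"
    by (metis ac_move.conj1)
qed
lemma E_conj2: "E a b a (- w + (b + w))"
proof (rule move_E)
  have "fmult (finv (Rep w)) (fmult (Rep b) (Rep w)) = Rep (- w + (b + w))"
    by (simp add: fmult_Rep finv_Rep)
  then show "ac_move (Rep a, Rep b) (Rep a, Rep (- w + (b + w)))"
    by (metis ac_move.conj2)
qed

lemma E_eq: "E a b c d \<Longrightarrow> c = c' \<Longrightarrow> d = d' \<Longrightarrow> E a b c' d'" by simp

lemma step_back:
  assumes "ac_move p q" "p = (Rep a, Rep b)"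
  shows "\<exists>c d. q = (Rep c, Rep d) \<and> E c d a b"
  using assms
proof cases
  case (mult1 r1 r2)
  then have e: "r1 = Rep a" "r2 = Rep b" using assms(2) by auto
  have q: "q = (Rep (a + b), Rep b)" using mult1 e by (simp add: fmult_Rep)
  have "E (a + b) b a b"
    apply (rule E_trans[OF E_inv2])
    apply (rule E_trans[OF E_mult1])
    apply (rule E_trans[OF E_inv2])
    apply (rule E_eq[OF E_refl]; simp add: add.assoc)
    done
  then show ?thesis using q by blast
next
  case (mult2 r1 r2)
  then have e: "r1 = Rep a" "r2 = Rep b" using assms(2) by auto
  have q: "q = (Rep a, Rep (b + a))" using mult2 e by (simp add: fmult_Rep)
  have "E a (b + a) a b"
    apply (rule E_trans[OF E_inv1])
    apply (rule E_trans[OF E_mult2])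
    apply (rule E_trans[OF E_inv1])
    apply (rule E_eq[OF E_refl]; simp add: add.assoc)
    done
  then show ?thesis using q by blast
next
  case (inv1 r1 r2)
  then have e: "r1 = Rep a" "r2 = Rep b" using assms(2) by auto
  have q: "q = (Rep (- a), Rep b)" using inv1 e by (simp add: finv_Rep)
  have "E (- a) b a b" by (rule E_eq[OF E_inv1]; simp)
  then show ?thesis using q by blast
next
  case (inv2 r1 r2)
  then have e: "r1 = Rep a" "r2 = Rep b" using assms(2) by auto
  have q: "q = (Rep a, Rep (- b))" using inv2 e by (simp add: finv_Rep)
  have "E a (- b) a b" by (rule E_eq[OF E_inv2]; simp)
  then show ?thesis using q by blast
next
  case (conj1 r1 r2 w)
  then have e: "r1 = Rep a" "r2 = Rep b" using assms(2) by auto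
  have q: "q = (Rep (- ev w + (a + ev w)), Rep b)" using conj1 e by (simp add: fmult_Rep finv_Rep)
  have "E (- ev w + (a + ev w)) b a b"
    by (rule E_eq[OF E_conj1[of _ _ "- ev w"]]; simp del: add_uminus_conv_diff add: diff_conv_add_uminus add.assoc)
  then show ?thesis using q by blast
next
  case (conj2 r1 r2 w)
  then have e: "r1 = Rep a" "r2 = Rep b" using assms(2) by auto
  have q: "q = (Rep a, Rep (- ev w + (b + ev w)))" using conj2 e by (simp add: fmult_Rep finv_Rep)
  have "E a (- ev w + (b + ev w)) a b"
    by (rule E_eq[OF E_conj2[of _ _ "- ev w"]]; simp del: add_uminus_conv_diff add: diff_conv_add_uminus add.assoc)
  then show ?thesis using q by blast
qed

lemma equiv_back:
  assumes "ac_equiv p q" "p = (Rep a, Rep b)"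
  shows "\<exists>c d. q = (Rep c, Rep d) \<and> E c d a b"
  using assms(1) unfolding ac_equiv_def
proof (induction rule: rtranclp_induct)
  case base
  then show ?case using assms(2) E_refl by blast
next
  case (step q r)
  then obtain c d where cd: "q = (Rep c, Rep d)" "E c d a b" by blast
  then obtain e f where "r = (Rep e, Rep f)" "E e f c d" using step_back[OF step(2) cd(1)] by blast
  then show ?case using cd E_trans by blast
qed

lemma E_sym: "E a b c d \<Longrightarrow> E c d a b"
  using equiv_back[of "(Rep a, Rep b)" "(Rep c, Rep d)" a b] unfolding E_def
  by (auto simp: Rep_inject)

lemma move_swap: "ac_move (a, b) (c, d) \<Longrightarrow> ac_move (b, a) (d, c)"
  by (cases rule: ac_move.cases) (auto intro: ac_move.intros)

lemma E_swap: "E a b c d \<Longrightarrow> E b a d c"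
proof -
  have "ac_move\<^sup>*\<^sup>* p q \<Longrightarrow> ac_move\<^sup>*\<^sup>* (prod.swap p) (prod.swap q)" for p q
  proof (induction rule: rtranclp_induct)
    case base then show ?case by simp
  next
    case (step q r)
    then show ?case
      by (metis (no_types, lifting) move_swap prod.collapse rtranclp.rtrancl_into_rtrancl swap_simp)
  qed
  then show "E a b c d \<Longrightarrow> E b a d c" unfolding E_def ac_equiv_def by force
qed


lemmas gs = add.assoc diff_conv_add_uminus minus_add minus_minus add_minus_cancel minus_add_cancel

fun gp :: "'a::group_add \<Rightarrow> nat \<Rightarrow> 'a" where
  "gp a 0 = 0" | "gp a (Suc k) = a + gp a k"

lemma gp_add: "gp a (i + j) = gp a i + gp a j"
  by (induction i) (simp_all add: add.assoc)

lemma gp_comm: "gp a k + a = a + gp a k"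
proof (induction k)
  case 0 then show ?case by simp
next
  case (Suc k)
  have "gp a (Suc k) + a = a + (gp a k + a)" by (simp add: add.assoc)
  then show ?case using Suc by simp
qed

lemma gp_Suc': "gp a (Suc k) = gp a k + a"
  by (simp add: gp_comm)

lemma gp_minus: "gp (- a) k = - gp a k"
proof (induction k)
  case 0 then show ?case by simp
next
  case (Suc k)
  have "- gp a (Suc k) = - (gp a k + a)" by (simp only: gp_Suc')
  then show ?case using Suc by (simp add: minus_add)
qed

lemma gp_conj: "gp (- c + a + c) k = - c + gp a k + c"
  by (induction k) (simp_all add: add.assoc)

lemma gp_conj1: "gp (- c + (a + c)) k = - c + (gp a k + c)"
  using gp_conj[of c a k] by (simp add: add.assoc)
lemma gp_conj2: "gp (c + (a + - c)) k = c + (gp a k + - c)"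
  using gp_conj[of "- c" a k] by (simp only: minus_minus add.assoc)

inductive_set ncl :: "'a::group_add \<Rightarrow> 'a set" for r where
  gen: "r \<in> ncl r"
| zero: "0 \<in> ncl r"
| neg: "u \<in> ncl r \<Longrightarrow> - u \<in> ncl r"
| add: "u \<in> ncl r \<Longrightarrow> v \<in> ncl r \<Longrightarrow> u + v \<in> ncl r"
| conj: "u \<in> ncl r \<Longrightarrow> w + u + - w \<in> ncl r"

definition cg :: "'a::group_add \<Rightarrow> 'a \<Rightarrow> 'a \<Rightarrow> bool" where
  "cg r u v \<longleftrightarrow> u + - v \<in> ncl r"

lemma cg_refl: "cg r u u" by (simp add: cg_def ncl.zero)
lemma cg_eq: "u = v \<Longrightarrow> cg r u v" by (simp add: cg_refl)
lemma cg_sym: "cg r u v \<Longrightarrow> cg r v u"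
  unfolding cg_def using ncl.neg by (fastforce simp: minus_add)
lemma cg_trans: "cg r u v \<Longrightarrow> cg r v w \<Longrightarrow> cg r u w"
proof -
  assume "cg r u v" "cg r v w"
  then have "(u + - v) + (v + - w) \<in> ncl r" unfolding cg_def by (rule ncl.add)
  then show ?thesis unfolding cg_def by (simp del: add_uminus_conv_diff add: gs)
qed
lemma cg_gen: "cg r r 0" by (simp add: cg_def ncl.gen)
lemma cg_add: "cg r u v \<Longrightarrow> cg r u' v' \<Longrightarrow> cg r (u + u') (v + v')"
proof -
  assume a: "cg r u v" "cg r u' v'"
  have "u + (u' + - v') + - u \<in> ncl r" using a(2) ncl.conj unfolding cg_def by blast
  then have "u + (u' + - v') + - u + (u + - v) \<in> ncl r" using a(1) ncl.add unfolding cg_def by blast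
  then show ?thesis unfolding cg_def by (simp del: add_uminus_conv_diff add: gs)
qed
lemma cg_neg: "cg r u v \<Longrightarrow> cg r (- u) (- v)"
proof -
  assume "cg r u v"
  then have "cg r v u" by (rule cg_sym)
  then have "- u + (v + - u) + - (- u) \<in> ncl r" unfolding cg_def by (rule ncl.conj)
  then show ?thesis unfolding cg_def by (simp add: add.assoc)
qed
lemma cg_gp: "cg r u v \<Longrightarrow> cg r (gp u k) (gp v k)"
  by (induction k) (auto intro: cg_add cg_refl)

lemma cg_addL: "cg r u v \<Longrightarrow> cg r (p + u) (p + v)" by (rule cg_add[OF cg_refl])
lemma cg_addR: "cg r u v \<Longrightarrow> cg r (u + q) (v + q)" by (rule cg_add[OF _ cg_refl])

lemma E_ncl: "u \<in> ncl a \<Longrightarrow> E a b a (b + u)"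
proof (induction u arbitrary: b rule: ncl.induct)
  case gen then show ?case by (rule E_mult2)
next
  case zero then show ?case by (simp add: E_refl)
next
  case (neg u)
  have "E a (b + - u) a (b + - u + u)" by (rule neg.IH)
  then show ?case by (simp add: add.assoc E_sym)
next
  case (add u v)
  show ?case using E_trans[OF add.IH(1) add.IH(2)] by (simp add: add.assoc)
next
  case (conj u w)
  have 1: "E a b a (- w + (b + w))" by (rule E_conj2)
  have 2: "E a (- w + (b + w)) a (- w + (b + w) + u)" by (rule conj.IH)
  have 3: "E a (- w + (b + w) + u) a (- (- w) + ((- w + (b + w) + u) + - w))" by (rule E_conj2)
  have "- (- w) + ((- w + (b + w) + u) + - w) = b + (w + u + - w)" by (simp del: add_uminus_conv_diff add: gs)
  then show ?case using E_trans[OF 1 E_trans[OF 2 3]] by simp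
qed

lemma E_cg2: "cg a b' (- w + b + w) \<Longrightarrow> E a b a b'"
proof -
  assume h: "cg a b' (- w + b + w)"
  define s where "s = - w + b + w"
  have "- s + (b' + - s) + - (- s) \<in> ncl a" using h unfolding cg_def s_def by (rule ncl.conj)
  then have m: "- s + b' \<in> ncl a" by (simp add: add.assoc)
  have "E a b a s" unfolding s_def using E_conj2[of a b w] by (simp add: add.assoc)
  moreover have "E a s a (s + (- s + b'))" using m by (rule E_ncl)
  ultimately show ?thesis using E_trans by (simp add: add.assoc)
qed

lemma E_cg2i: "cg a b' (- w + - b + w) \<Longrightarrow> E a b a b'"
  using E_trans[OF E_inv2 E_cg2] by blast

lemma E_cg1: "cg b a' (- w + a + w) \<Longrightarrow> E a b a' b"
  using E_swap[OF E_cg2] by blast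

lemma E_cg1i: "cg b a' (- w + - a + w) \<Longrightarrow> E a b a' b"
  using E_swap[OF E_cg2i] by blast

lemma E_swap_pair: "E a b b a"
proof -
  have 1: "E a b (a + b) b" by (rule E_mult1)
  have "a + (a + b) + - a \<in> ncl (a + b)" by (rule ncl.conj[OF ncl.gen])
  then have "cg (a + b) a (- (- a) + - b + - a)" unfolding cg_def
    by (simp del: add_uminus_conv_diff add: gs)
  then have 2: "E (a + b) b (a + b) a" by (rule E_cg2i)
  have "- a \<in> ncl a" by (rule ncl.neg[OF ncl.gen])
  then have "cg a b (- 0 + (a + b) + 0)" unfolding cg_def
    by (simp del: add_uminus_conv_diff add: gs)
  then have 3: "E (a + b) a b a" by (rule E_cg1)
  show ?thesis using E_trans[OF 1 E_trans[OF 2 3]] .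
qed


declare cg_trans [trans]

lemma cg_rw: "cg r u v \<Longrightarrow> u = u' \<Longrightarrow> v = v' \<Longrightarrow> cg r u' v'" by simp

lemma gp_comm_neg: "- gp a k + (- a + z) = - a + (- gp a k + z)"
proof -
  have "- gp a k + - a = - a + - gp a k"
    using arg_cong[OF gp_comm[of a k], of uminus] by (simp add: minus_add)
  then show ?thesis by (metis add.assoc)
qed

lemma hard:
  fixes a b :: "'a::group_add"
  defines "R \<equiv> a + b + a + - b + - a + - b" and "D \<equiv> a + b + a"
  shows "cg R (- b + gp (- a) (Suc n) + b + gp a n)
     (- (gp a n + - D + (a + b)) + (gp a n + gp (- b) (Suc n)) + (gp a n + - D + (a + b)))"
proof -
  have "a + b + a + - (b + a + b) = R" by (simp del: add_uminus_conv_diff add: gs R_def)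
  then have h0: "cg R D (b + a + b)" unfolding cg_def D_def using ncl.gen[of R] by simp
  have "cg R (- a + D + - b) (- a + (b + a + b) + - b)" by (rule cg_addR[OF cg_addL[OF h0]])
  then have h1: "cg R (- (- b) + a + - b) (- a + b + a)"
    by (simp del: add_uminus_conv_diff add: gs D_def)
  have h2: "cg R (b + gp a n + - b) (- a + gp b n + a)"
    using cg_gp[OF h1, of n] by (simp del: add_uminus_conv_diff add: gs gp_conj1 gp_conj2)
  have h3: "cg R (gp a k) (D + gp b k + - D)" for k
  proof -
    have "cg R (a + D + - D) (a + (b + a + b) + - D)" by (rule cg_addR[OF cg_addL[OF h0]])
    then have "cg R a (D + (b + - D))"
      by (rule cg_rw) (simp_all del: add_uminus_conv_diff add: gs D_def)
    then have "cg R (gp a k) (gp (D + (b + - D)) k)" by (rule cg_gp)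
    then show ?thesis by (simp only: gp_conj2 add.assoc)
  qed
  have h4: "cg R (gp b k) (D + gp a k + - D)" for k
  proof -
    have "cg R (b + a + b + a + - D) (D + a + - D)" by (rule cg_addR[OF cg_addR[OF cg_sym[OF h0]]])
    then have "cg R b (D + (a + - D))"
      by (rule cg_rw) (simp_all del: add_uminus_conv_diff add: gs D_def)
    then have "cg R (gp b k) (gp (D + (a + - D)) k)" by (rule cg_gp)
    then show ?thesis by (simp only: gp_conj2 add.assoc)
  qed
  have "- b + gp (- a) (Suc n) + b + gp a n = - b + - gp a (Suc n) + (b + gp a n + - b) + b"
    by (simp del: add_uminus_conv_diff gp.simps add: gs gp_minus)
  also have "cg R \<dots> (- b + - gp a (Suc n) + (- a + gp b n + a) + b)"
    by (intro cg_addR cg_addL h2)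
  also have "- b + - gp a (Suc n) + (- a + gp b n + a) + b = - b + - a + (- gp a (Suc n) + gp b n) + a + b"
    by (simp del: add_uminus_conv_diff gp.simps add: gs gp_comm_neg)
  also have "cg R \<dots> (- b + - a + (- (D + gp b (Suc n) + - D) + (D + gp a n + - D)) + a + b)"
    by (intro cg_addR cg_addL cg_add cg_neg h3 h4)
  also have "- b + - a + (- (D + gp b (Suc n) + - D) + (D + gp a n + - D)) + a + b
     = - (gp a n + - D + (a + b)) + (gp a n + gp (- b) (Suc n)) + (gp a n + - D + (a + b))"
    by (simp del: add_uminus_conv_diff gp.simps add: gs gp_minus)
  finally show ?thesis .
qed


lemma comm_fam:
  fixes a g :: "'a::group_add"
  assumes c: "g + a = a + g"
  shows "g + (a + z) = a + (g + z)" "- g + a = a + - g" "- g + (a + z) = a + (- g + z)"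
    "g + - a = - a + g" "g + (- a + z) = - a + (g + z)" "- g + - a = - a + - g"
    "- g + (- a + z) = - a + (- g + z)"
proof -
  show 1: "g + (a + z) = a + (g + z)" using c by (metis add.assoc)
  have 2: "- g + a = a + - g"
  proof -
    have "- g + a = - g + (a + g) + - g" by (simp del: add_uminus_conv_diff add: gs)
    also have "\<dots> = a + - g" by (simp only: c[symmetric]) (simp del: add_uminus_conv_diff add: gs)
    finally show ?thesis .
  qed
  show "- g + a = a + - g" by (rule 2)
  show "- g + (a + z) = a + (- g + z)" using 2 by (metis add.assoc)
  have 3: "g + - a = - a + g"
  proof -
    have "g + - a = - a + (a + g) + - a" by (simp del: add_uminus_conv_diff add: gs)
    also have "\<dots> = - a + g" by (simp only: c[symmetric]) (simp del: add_uminus_conv_diff add: gs)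
    finally show ?thesis .
  qed
  show "g + - a = - a + g" by (rule 3)
  show "g + (- a + z) = - a + (g + z)" using 3 by (metis add.assoc)
  have 4: "- g + - a = - a + - g" using arg_cong[OF c, of uminus] by (simp add: minus_add)
  show "- g + - a = - a + - g" by (rule 4)
  show "- g + (- a + z) = - a + (- g + z)" using 4 by (metis add.assoc)
qed

lemma stepT:
  fixes a b :: "'a::group_add"
  defines "R \<equiv> a + b + a + - b + - a + - b"
  shows "cg R (- b + gp (- a) (Suc m) + b + a + - b + gp a m)
              (- b + gp (- a) (Suc (Suc m)) + b + gp a (Suc m))"
proof -
  have "a + b + a + - (b + a + b) = R" by (simp del: add_uminus_conv_diff add: gs R_def)
  then have h0: "cg R (a + b + a) (b + a + b)" unfolding cg_def using ncl.gen[of R] by simp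
  have "cg R (- a + (a + b + a) + - b) (- a + (b + a + b) + - b)" by (rule cg_addR[OF cg_addL[OF h0]])
  then have h1: "cg R (b + a + - b) (- a + b + a)"
    by (rule cg_rw) (simp_all del: add_uminus_conv_diff add: gs)
  have "- b + gp (- a) (Suc m) + b + a + - b + gp a m = (- b + gp (- a) (Suc m)) + (b + a + - b) + gp a m"
    by (simp only: add.assoc)
  also have "cg R \<dots> ((- b + gp (- a) (Suc m)) + (- a + b + a) + gp a m)"
    by (rule cg_addR[OF cg_addL[OF h1]])
  also have "(- b + gp (- a) (Suc m)) + (- a + b + a) + gp a m = - b + gp (- a) (Suc (Suc m)) + b + gp a (Suc m)"
    by (simp del: add_uminus_conv_diff gp.simps add: gs gp_Suc'[of "- a" "Suc m"]) (simp add: add.assoc)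
  finally show ?thesis .
qed

lemma stepS12:
  fixes a b :: "'a::group_add" and m :: nat
  defines "R \<equiv> a + b + a + - b + - a + - b"
    and "T \<equiv> - b + gp (- a) (Suc m) + b + a + - b + gp a m"
    and "P2 \<equiv> - b + gp (- a) (Suc (Suc m)) + b + gp a (Suc m)"
  shows "cg T P2 (- (a + (b + a + - b) + gp a m) + - R + (a + (b + a + - b) + gp a m))"
proof -
  define w where "w = a + (b + a + - b) + gp a m"
  define w2 where "w2 = b + a + - b + gp a m"
  define q where "q = gp a (Suc m) + b"
  have "- w2 + q + - T + - (- w2 + q) \<in> ncl T" by (rule ncl.conj[OF ncl.neg[OF ncl.gen]])
  then have Rt: "- w2 + q + - T + - q + w2 \<in> ncl T" by (simp del: add_uminus_conv_diff add: gs)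
  have id: "- P2 = (- w + R + w) + (- w2 + q + - T + - q + w2)"
    unfolding P2_def R_def T_def w_def w2_def q_def
    by (simp del: add_uminus_conv_diff add: gs gp_minus comm_fam[OF gp_comm[of a m]] gp_comm[of a m])
  have "(- w + R + w) + (- w2 + q + - T + - q + w2) + - (- w + R + w) \<in> ncl T"
    using ncl.conj[OF Rt] by simp
  then have "cg T (- P2) (- w + R + w)" unfolding cg_def id .
  then have "cg T (- (- P2)) (- (- w + R + w))" by (rule cg_neg)
  then show ?thesis unfolding w_def[symmetric] by (simp del: add_uminus_conv_diff add: add.assoc minus_add)
qed


lemma ncl_conj_gen: "w + r + - w \<in> ncl r" by (rule ncl.conj[OF ncl.gen])

lemma cg_of_prod: "u = v + r \<Longrightarrow> cg r u v"
proof -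
  assume "u = v + r"
  moreover have "v + r + - v \<in> ncl r" by (rule ncl_conj_gen)
  ultimately show ?thesis unfolding cg_def by (simp add: add.assoc)
qed

lemma stepS23:
  fixes a b :: "'a::group_add" and m :: nat
  defines "T \<equiv> - b + gp (- a) (Suc m) + b + a + - b + gp a m"
    and "P2 \<equiv> - b + gp (- a) (Suc (Suc m)) + b + gp a (Suc m)"
    and "P1 \<equiv> - b + - a + - a + - b + gp (- a) (Suc m) + b + gp a (Suc (Suc m))"
  shows "cg P2 P1 (- (- (- b + - a + - a)) + T + (- (- b + - a + - a)))"
  apply (rule cg_of_prod)
  unfolding P2_def P1_def T_def
  by (simp del: add_uminus_conv_diff add: gs gp_minus comm_fam[OF gp_comm[of a m]] gp_comm[of a m])

lemma stepS45:
  fixes a b :: "'a::group_add" and m :: nat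
  defines "P2 \<equiv> - b + gp (- a) (Suc (Suc m)) + b + gp a (Suc m)"
    and "P1 \<equiv> - b + - a + - a + - b + gp (- a) (Suc m) + b + gp a (Suc (Suc m))"
    and "Rp \<equiv> a + (b + a) + a + - (b + a) + - a + - (b + a)"
  shows "cg P2 P1 (- (a + b + a) + Rp + (a + b + a))"
proof -
  define V where "V = - (a + b + a) + Rp + (a + b + a)"
  have id: "P1 = V + - a + P2 + a" unfolding P2_def P1_def V_def Rp_def
    by (simp del: add_uminus_conv_diff add: gs gp_minus comm_fam[OF gp_comm[of a m]] gp_comm[of a m])
  have "(V + - a) + P2 + - (V + - a) \<in> ncl P2" by (rule ncl_conj_gen)
  then show ?thesis unfolding cg_def V_def[symmetric] id
    by (simp del: add_uminus_conv_diff add: gs)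
qed


lemma ev_neg_letter: "ev [(g, False)] = - ev [(g, True)]"
proof -
  have "iw [(g, True)] = [(g, False)]" by (simp add: flip_def)
  then show ?thesis using ev_iw[of "[(g, True)]"] by simp
qed

lemma ev_rep: "ev (replicate k l) = gp (ev [l]) k"
  by (induction k) (simp_all add: ev_Nil, subst ev_Cons, simp)

lemma ev_concat_rep: "ev (concat (replicate k u)) = gp (ev u) k"
  by (induction k) (simp_all add: ev_Nil ev_append)

lemma rd_rep: "rd w \<Longrightarrow> (\<forall>b w'. w = b # w' \<longrightarrow> \<not> (fst a = fst b \<and> snd a \<noteq> snd b)) \<Longrightarrow> rd (replicate k a @ w)"
proof (induction k)
  case 0 then show ?case by simp
next
  case (Suc k)
  then show ?case by (cases k; cases w) auto
qed

lemma AK2_red: "red (AK2 n) = AK2 n"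
proof -
  have "rd (replicate (Suc n) (Y, False))" using rd_rep[of "[]" "(Y, False)" "Suc n"] by simp
  then have "rd (replicate n (X, True) @ replicate (Suc n) (Y, False))"
    by (intro rd_rep) auto
  then show ?thesis unfolding AK2_def by (simp add: red_rd)
qed

theorem lemma6:
  fixes n :: nat
  assumes "n \<ge> 3"
  shows "ac_equiv (phi AK1, phi (AK2 n)) (AK1, AK2 n)"
proof -
  obtain m where n: "n = Suc m" using assms by (cases n) auto
  define x where "x = ev [(X, True)]"
  define y where "y = ev [(Y, True)]"
  define R where "R = x + y + x + - y + - x + - y"
  define r2 where "r2 = gp x n + gp (- y) (Suc n)"
  define T where "T = - y + gp (- x) (Suc m) + y + x + - y + gp x m"
  define P2 where "P2 = - y + gp (- x) (Suc (Suc m)) + y + gp x (Suc m)"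
  define P1 where "P1 = - y + - x + - x + - y + gp (- x) (Suc m) + y + gp x (Suc (Suc m))"
  define Rp where "Rp = x + (y + x) + x + - (y + x) + - x + - (y + x)"
  define r2p where "r2p = gp x n + gp (- (y + x)) (Suc n)"
  have eAK1: "AK1 = Rep R"
  proof -
    have "AK1 = Rep (ev AK1)" by (simp add: Rep_ev AK1_def red_def)
    also have "ev AK1 = R" unfolding AK1_def R_def x_def y_def
      by (simp del: add_uminus_conv_diff add: gs ev_Cons[of _ "_ # _"] ev_neg_letter ev_Nil)
    finally show ?thesis .
  qed
  have eAK2: "AK2 n = Rep r2"
  proof -
    have "AK2 n = Rep (ev (AK2 n))" by (simp add: Rep_ev AK2_red)
    also have "ev (AK2 n) = r2" unfolding AK2_def r2_def x_def y_def
      by (simp add: ev_append ev_rep ev_neg_letter del: replicate.simps)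
    finally show ?thesis .
  qed
  have ephi1: "phi AK1 = Rep Rp"
  proof -
    have "phi AK1 = Rep (ev (concat (map phi_letter AK1)))" by (simp add: phi_def Rep_ev)
    also have "ev (concat (map phi_letter AK1)) = Rp" unfolding AK1_def Rp_def x_def y_def
      by (simp del: add_uminus_conv_diff add: gs ev_Cons[of _ "_ # _"] ev_neg_letter ev_Nil)
    finally show ?thesis .
  qed
  have ephi2: "phi (AK2 n) = Rep r2p"
  proof -
    have "phi (AK2 n) = Rep (ev (concat (map phi_letter (AK2 n))))" by (simp add: phi_def Rep_ev)
    also have "ev (concat (map phi_letter (AK2 n))) = r2p" unfolding AK2_def r2p_def x_def y_def
      by (simp add: ev_append ev_concat_rep ev_rep ev_neg_letter ev_Cons[of _ "_ # _"] ev_Nil minus_add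
          del: replicate.simps)
    finally show ?thesis .
  qed
  have E1: "E R r2 R T"
  proof (rule E_cg2)
    show "cg R T (- (gp x n + - (x + y + x) + (x + y)) + r2 + (gp x n + - (x + y + x) + (x + y)))"
      using cg_trans[OF stepT[where a=x and b=y and m=m] hard[where a=x and b=y and n="Suc m"]]
      unfolding R_def T_def r2_def n by simp
  qed
  have E2: "E R T P2 T"
    unfolding R_def T_def P2_def by (rule E_cg1i[OF stepS12[where a=x and b=y and m=m]])
  have E3: "E P2 T P2 P1"
    unfolding T_def P2_def P1_def by (rule E_cg2[OF stepS23[where a=x and b=y and m=m]])
  have E4: "E P2 P1 P1 P2" by (rule E_swap_pair)
  have E5: "E Rp P2 P1 P2"
    unfolding Rp_def P2_def P1_def by (rule E_cg1[OF stepS45[where a=x and b=y and m=m]])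
  have E6: "E Rp r2p Rp P2"
  proof (rule E_cg2[where w = "gp x n + - (x + (y + x) + x) + (x + (y + x)) + - x"])
    have h: "cg Rp (x + (- (y + x) + gp (- x) (Suc n) + (y + x) + gp x n) + - x)
       (x + (- (gp x n + - (x + (y + x) + x) + (x + (y + x))) + r2p + (gp x n + - (x + (y + x) + x) + (x + (y + x)))) + - x)"
      using cg_addR[OF cg_addL[OF hard[where a=x and b="y + x" and n=n]]] unfolding Rp_def r2p_def .
    show "cg Rp P2 (- (gp x n + - (x + (y + x) + x) + (x + (y + x)) + - x) + r2p + (gp x n + - (x + (y + x) + x) + (x + (y + x)) + - x))"
      apply (rule cg_rw[OF h])
      unfolding P2_def n
       apply (simp del: add_uminus_conv_diff gp.simps add: gs gp_minus comm_fam[OF gp_comm[of x "Suc m"]] gp_comm[of x "Suc m"])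
      apply (simp del: add_uminus_conv_diff gp.simps add: gs)
      done
  qed
  have "E Rp r2p R r2"
    using E_trans[OF E6 E_trans[OF E5 E_trans[OF E_sym[OF E4] E_trans[OF E_sym[OF E3]
          E_trans[OF E_sym[OF E2] E_sym[OF E1]]]]]] .
  then show ?thesis unfolding E_def ephi1 ephi2 unfolding eAK1 eAK2 .
qed

end
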